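(* Let $n\ge1$ and let $A_1,\dots,A_n$ be events in a probability space. Then \[ \Pr\Big(\bigcup_{i=1}^n A_i\Big) \;\ge\; \frac{1}{\lceil n/2\rceil}\Big(\sum_{i=1}^n\Pr(A_i) - \frac{2}{n}\sum_{1\le i<j\le n}\Pr(A_i\cap A_j)\Big). \] *)

theory Defs
  imports "HOL-Probability.Probability"
begin

end

theory Submission
  imports Defs
begin

lemma pairsum:
  fixes x :: "nat \<Rightarrow> real"
  shows "2 * (\<Sum>i=1..n. \<Sum>j\<in>{i<..n}. x i * x j) = (\<Sum>i=1..n. x i)^2 - (\<Sum>i=1..n. x i ^2)"
proof (induction n)
  case 0
  then show ?case by simp
next
  case (Suc n)
  have e: "\<And>i. i \<in> {1..n} \<Longrightarrow> {i<..Suc n} = insert (Suc n) {i<..n}" by auto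
  have "(\<Sum>i=1..Suc n. \<Sum>j\<in>{i<..Suc n}. x i * x j) = (\<Sum>i=1..n. \<Sum>j\<in>{i<..Suc n}. x i * x j)"
    by (simp add: sum.atLeast_Suc_atMost_Suc_shift)
  also have "\<dots> = (\<Sum>i=1..n. x i * x (Suc n) + (\<Sum>j\<in>{i<..n}. x i * x j))"
    by (rule sum.cong) (auto simp: e)
  also have "\<dots> = (\<Sum>i=1..n. x i) * x (Suc n) + (\<Sum>i=1..n. \<Sum>j\<in>{i<..n}. x i * x j)"
    by (simp add: sum.distrib sum_distrib_right)
  finally show ?case using Suc
    by (simp add: power2_eq_square algebra_simps)
qed

lemma key:
  fixes k n m :: nat
  assumes "1 \<le> k" "k \<le> n" "n \<le> 2 * m"
  shows "k * (n + 1 - k) \<le> n * m"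
proof (cases "k \<le> m")
  case True
  have "k * (n + 1 - k) \<le> m * n" using assms True by (intro mult_mono) auto
  then show ?thesis by (simp add: mult.commute)
next
  case False
  have "k * (n + 1 - k) \<le> n * m" using assms False by (intro mult_mono) auto
  then show ?thesis .
qed

lemma pointwise:
  fixes x :: "nat \<Rightarrow> real" and n m :: nat and u :: real
  assumes x01: "\<And>i. x i = 0 \<or> x i = 1" and n1: "n \<ge> 1" and nm: "n \<le> 2 * m"
    and u: "(\<exists>i\<in>{1..n}. x i = 1) \<Longrightarrow> u = 1" and u0: "u \<ge> 0"
  shows "u \<ge> (1 / real m) * ((\<Sum>i=1..n. x i) - (2 / real n) * (\<Sum>i=1..n. \<Sum>j\<in>{i<..n}. x i * x j))"
proof -
  define S where "S = {i\<in>{1..n}. x i = 1}"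
  define k where "k = card S"
  have fS: "finite S" unfolding S_def by auto
  have sx: "(\<Sum>i=1..n. x i) = real k"
  proof -
    have "(\<Sum>i=1..n. x i) = (\<Sum>i\<in>{1..n}. if x i = 1 then 1 else 0)"
      by (rule sum.cong) (use x01 in auto)
    also have "\<dots> = real k" by (simp add: sum.If_cases S_def k_def Int_def conj_commute)
    finally show ?thesis .
  qed
  have sx2: "(\<Sum>i=1..n. x i ^ 2) = real k"
    proof - have "(\<Sum>i=1..n. x i ^ 2) = (\<Sum>i=1..n. x i)" by (rule sum.cong) (use x01 in \<open>auto simp: power2_eq_square\<close>) then show ?thesis using sx by simp qed
  have P: "(\<Sum>i=1..n. \<Sum>j\<in>{i<..n}. x i * x j) = (real k ^ 2 - real k) / 2"
    using pairsum[of x n] sx sx2 by simp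
  have kn: "k \<le> n" unfolding k_def S_def by (metis (no_types, lifting) card_atLeastAtMost card_mono diff_Suc_1 finite_atLeastAtMost mem_Collect_eq subsetI)
  have m1: "m \<ge> 1" using n1 nm by linarith
  show ?thesis
  proof (cases "k = 0")
    case True
    then show ?thesis using sx P u0 by simp
  next
    case False
    then have "S \<noteq> {}" unfolding k_def by auto
    then obtain i where "i \<in> S" by auto
    then have "u = 1" using u unfolding S_def by blast
    have kk: "k * (n + 1 - k) \<le> n * m" using key[of k n m] False kn nm by auto
    have "real (k * (n + 1 - k)) \<le> real (n * m)" using kk by (simp only: of_nat_le_iff)
    then have "real k * (real n + 1 - real k) \<le> real n * real m" using kn by (simp add: of_nat_diff add.commute)
    then have "real k - (2 / real n) * ((real k ^ 2 - real k) / 2) \<le> real m"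
      using n1 by (simp add: field_simps power2_eq_square)
    then have "(1 / real m) * (real k - (2 / real n) * ((real k ^ 2 - real k) / 2)) \<le> 1"
      using m1 by (simp add: field_simps)
    then show ?thesis unfolding sx P \<open>u = 1\<close> by simp
  qed
qed

theorem corollary2:
  fixes M :: "'a measure" and A :: "nat \<Rightarrow> 'a set" and n :: nat
  assumes "prob_space M"
    and "n \<ge> 1"
    and "\<And>i. i \<in> {1..n} \<Longrightarrow> A i \<in> sets M"
  shows "measure M (\<Union>i\<in>{1..n}. A i) \<ge>
    (1 / real (nat \<lceil>real n / 2\<rceil>)) *
      ((\<Sum>i=1..n. measure M (A i))
        - (2 / real n) * (\<Sum>(i,j)\<in>{(i,j). 1 \<le> i \<and> i < j \<and> j \<le> n}. measure M (A i \<inter> A j)))"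
proof -
  interpret prob_space M by fact
  note sA = assms(3)
  define m where "m = nat \<lceil>real n / 2\<rceil>"
  have nm: "n \<le> 2 * m" unfolding m_def by linarith
  have Sig: "{(i,j). 1 \<le> i \<and> i < j \<and> j \<le> n} = (SIGMA i:{1..n}. {i<..n})" by auto
  have ps: "(\<Sum>(i,j)\<in>{(i,j). 1 \<le> i \<and> i < j \<and> j \<le> n}. measure M (A i \<inter> A j))
      = (\<Sum>i=1..n. \<Sum>j\<in>{i<..n}. measure M (A i \<inter> A j))"
    unfolding Sig by (subst sum.Sigma) auto
  define U where "U = (\<Union>i\<in>{1..n}. A i)"
  have sU: "U \<in> sets M" unfolding U_def using sA by auto
  have int: "\<And>B. B \<in> sets M \<Longrightarrow> integrable M (indicator B :: 'a \<Rightarrow> real)"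
    by (simp add: emeasure_eq_measure)
  have mi: "\<And>B. B \<in> sets M \<Longrightarrow> measure M B = (\<integral>\<omega>. indicator B \<omega> \<partial>M)"
    by (simp add: Int_absorb2 sets.sets_into_space)
  define F where "F = (\<lambda>\<omega>. (1 / real m) * ((\<Sum>i=1..n. indicator (A i) \<omega>)
     - (2 / real n) * (\<Sum>i=1..n. \<Sum>j\<in>{i<..n}. indicator (A i) \<omega> * indicator (A j) \<omega>)) :: real)"
  have ind2: "\<And>i j \<omega>. indicator (A i \<inter> A j) \<omega> = (indicator (A i) \<omega> * indicator (A j) \<omega> :: real)"
    by (simp add: indicator_inter_arith)
  have i1: "integrable M (\<lambda>\<omega>. \<Sum>i=1..n. indicator (A i) \<omega> :: real)"
    using sA int by (intro Bochner_Integration.integrable_sum) auto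
  have i2: "integrable M (\<lambda>\<omega>. \<Sum>i=1..n. \<Sum>j\<in>{i<..n}. indicator (A i) \<omega> * indicator (A j) \<omega> :: real)"
    unfolding ind2[symmetric] using sA int by (intro Bochner_Integration.integrable_sum) auto
  have intF: "integral\<^sup>L M F = (1 / real m) * ((\<Sum>i=1..n. measure M (A i))
        - (2 / real n) * (\<Sum>i=1..n. \<Sum>j\<in>{i<..n}. measure M (A i \<inter> A j)))"
  proof -
    have e1: "(\<integral>\<omega>. (\<Sum>i=1..n. indicator (A i) \<omega> :: real) \<partial>M) = (\<Sum>i=1..n. measure M (A i))"
      using sA int by (subst Bochner_Integration.integral_sum) (auto intro!: sum.cong simp: Int_absorb2 sets.sets_into_space)
    have e2a: "(\<integral>\<omega>. (\<Sum>i=1..n. \<Sum>j\<in>{i<..n}. indicator (A i \<inter> A j) \<omega> :: real) \<partial>M)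
       = (\<Sum>i=1..n. (\<integral>\<omega>. (\<Sum>j\<in>{i<..n}. indicator (A i \<inter> A j) \<omega> :: real) \<partial>M))"
    proof (rule Bochner_Integration.integral_sum)
      fix i assume "i \<in> {1..n}"
      then show "integrable M (\<lambda>\<omega>. \<Sum>j\<in>{i<..n}. indicator (A i \<inter> A j) \<omega> :: real)"
        using sA by (intro Bochner_Integration.integrable_sum int sets.Int) auto
    qed
    have e2b: "\<And>i. i \<in> {1..n} \<Longrightarrow> (\<integral>\<omega>. (\<Sum>j\<in>{i<..n}. indicator (A i \<inter> A j) \<omega> :: real) \<partial>M)
        = (\<Sum>j\<in>{i<..n}. measure M (A i \<inter> A j))"
    proof -
      fix i assume i: "i \<in> {1..n}"
      have "(\<integral>\<omega>. (\<Sum>j\<in>{i<..n}. indicator (A i \<inter> A j) \<omega> :: real) \<partial>M)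
         = (\<Sum>j\<in>{i<..n}. (\<integral>\<omega>. indicator (A i \<inter> A j) \<omega> \<partial>M))"
        using i sA by (intro Bochner_Integration.integral_sum int sets.Int) auto
      also have "\<dots> = (\<Sum>j\<in>{i<..n}. measure M (A i \<inter> A j))"
        using i sA by (intro sum.cong refl mi[symmetric] sets.Int) auto
      finally show "?thesis i" .
    qed
    have e2: "(\<integral>\<omega>. (\<Sum>i=1..n. \<Sum>j\<in>{i<..n}. indicator (A i) \<omega> * indicator (A j) \<omega> :: real) \<partial>M)
       = (\<Sum>i=1..n. \<Sum>j\<in>{i<..n}. measure M (A i \<inter> A j))"
      unfolding ind2[symmetric] e2a using e2b by (rule sum.cong[OF refl])
    show ?thesis unfolding F_def using i1 i2 e1 e2 by simp
  qed
  have "integral\<^sup>L M F \<le> (\<integral>\<omega>. indicator U \<omega> \<partial>M)"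
  proof (rule integral_mono)
    show "integrable M F" unfolding F_def using i1 i2 by (intro Bochner_Integration.integrable_mult_right Bochner_Integration.integrable_diff)
    show "integrable M (indicator U :: 'a \<Rightarrow> real)" using int sU .
    fix \<omega> show "F \<omega> \<le> indicator U \<omega>"
      unfolding F_def
    proof (rule pointwise)
      show "\<And>i. indicator (A i) \<omega> = (0::real) \<or> indicator (A i) \<omega> = 1" by (simp add: indicator_def)
      show "1 \<le> n" using assms(2) .
      show "n \<le> 2 * m" using nm .
      show "(\<exists>i\<in>{1..n}. indicator (A i) \<omega> = (1::real)) \<Longrightarrow> indicator U \<omega> = (1::real)"
        unfolding U_def by (auto simp: indicator_def split: if_splits)
      show "0 \<le> (indicator U \<omega> :: real)" by simp
    qed
  qed
  then show ?thesis unfolding ps U_def[symmetric] m_def[symmetric] using intF mi[OF sU] by linarith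
qed

end
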